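(* Let $T\in\mathcal{B}(\mathbb{C}^d)$ be power bounded. Then the limit $A_{T,C}:=\lim_{n\to\infty}\frac1n\sum_{j=1}^nT^{*j}T^j$ exists (in norm), and $A_{T,L}=A_{T,C}$ for every Banach limit $L$. Conversely, if the sequence $\frac1n\sum_{j=1}^nT^{*j}T^j$ converges for a matrix $T$, then $T$ is power bounded.
   Context: $T$ is power bounded if $\sup_n\|T^n\|<\infty$. A Banach limit is a linear functional $L$ on $\ell^\infty(\mathbb{N})$, written $\operatorname{L-lim}$, with $\|L\|=1$, agreeing with the ordinary limit on convergent sequences, positive, and shift-invariant ($\operatorname{L-lim}x_n=\operatorname{L-lim}x_{n+1}$). For power bounded $T$, $A_{T,L}$ is the positive operator with $\langle A_{T,L}x,y\rangle=\operatorname{L-lim}_n\langle T^{*n}T^nx,y\rangle$. *)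

theory Defs
  imports "HOL-Analysis.Analysis"
begin

text \<open>Operators on C^d are d x d complex matrices, with the index type 'n finite (d = CARD('n)).\<close>

primrec matpow :: "'a::comm_ring_1 ^'n^'n \<Rightarrow> nat \<Rightarrow> 'a ^'n^'n" where
  "matpow T 0 = mat 1"
| "matpow T (Suc k) = T ** matpow T k"

definition adj :: "complex ^'n^'m \<Rightarrow> complex ^'m^'n" where
  "adj T = (\<chi> i j. cnj (T $ j $ i))"

definition cinner :: "complex ^'n \<Rightarrow> complex ^'n \<Rightarrow> complex" where
  "cinner x y = (\<Sum>i\<in>UNIV. x $ i * cnj (y $ i))"

definition power_bounded :: "complex ^'n^'n \<Rightarrow> bool" where
  "power_bounded T \<longleftrightarrow> bdd_above (range (\<lambda>k. onorm (\<lambda>x. matpow T k *v x)))"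

definition cesaro :: "complex ^'n^'n \<Rightarrow> nat \<Rightarrow> complex ^'n^'n" where
  "cesaro T n = (1 / of_nat n) *\<^sub>R (\<Sum>j=1..n. adj (matpow T j) ** matpow T j)"

text \<open>Banach limits on the complex space l^\<infinity>(N); L is only constrained on bounded sequences.\<close>
definition banach_limit :: "((nat \<Rightarrow> complex) \<Rightarrow> complex) \<Rightarrow> bool" where
  "banach_limit L \<longleftrightarrow>
     (\<forall>x y a b. bounded (range x) \<longrightarrow> bounded (range y) \<longrightarrow>
         L (\<lambda>n. a * x n + b * y n) = a * L x + b * L y)
   \<and> (\<forall>x. bounded (range x) \<longrightarrow> norm (L x) \<le> (SUP n. norm (x n)))
   \<and> (\<exists>x. bounded (range x) \<and> (SUP n. norm (x n)) \<le> 1 \<and> norm (L x) = 1)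
   \<and> (\<forall>x. convergent x \<longrightarrow> L x = lim x)
   \<and> (\<forall>x. bounded (range x) \<longrightarrow> (\<forall>n. x n \<in> \<real> \<and> 0 \<le> Re (x n)) \<longrightarrow> L x \<in> \<real> \<and> 0 \<le> Re (L x))
   \<and> (\<forall>x. bounded (range x) \<longrightarrow> L (\<lambda>n. x (Suc n)) = L x)"

end

theory Submission
  imports Defs
begin

lemma matpow_Suc': "matpow T (Suc n) = matpow T n ** T"
  by (induction n) (simp_all add: matrix_mul_assoc)

lemma matpow_add: "matpow T (j + k) = matpow T j ** matpow T k"
  by (induction j) (simp_all add: matrix_mul_assoc)

lemma adj_mult: "adj (A ** B) = adj B ** adj (A :: complex^'n^'m)"
  by (simp add: adj_def matrix_matrix_mult_def vec_eq_iff mult.commute)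

lemma adj_mat1[simp]: "adj (mat 1 :: complex^'n^'n) = mat 1"
  by (simp add: adj_def mat_def vec_eq_iff)

lemma cinner_adj: "cinner (adj M *v z) w = cinner z (M *v w)"
proof -
  have "cinner (adj M *v z) w = (\<Sum>i\<in>UNIV. \<Sum>j\<in>UNIV. cnj (M$j$i) * z$j * cnj (w$i))"
    by (simp add: cinner_def adj_def matrix_vector_mult_def sum_distrib_right)
  also have "\<dots> = (\<Sum>j\<in>UNIV. \<Sum>i\<in>UNIV. cnj (M$j$i) * z$j * cnj (w$i))"
    by (rule sum.swap)
  also have "\<dots> = cinner z (M *v w)"
    unfolding cinner_def matrix_vector_mult_def
    by (simp add: sum_distrib_left mult_ac)
  finally show ?thesis .
qed

lemma norm_sq_vec: "(norm (z :: complex^'n))^2 = (\<Sum>i\<in>UNIV. (cmod (z$i))^2)"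
  by (simp add: norm_vec_def L2_set_def sum_nonneg)

lemma cinner_self: "cinner z z = complex_of_real ((norm z)^2)"
  unfolding norm_sq_vec cinner_def of_real_sum
  by (rule sum.cong[OF refl]) (rule complex_norm_square[symmetric])

lemma bilin_mm: "bounded_bilinear (\<lambda>(A::complex^'n^'m) (B::complex^'p^'n). A ** B)"
  unfolding bilinear_conv_bounded_bilinear[symmetric] bilinear_def linear_iff
  by (simp add: matrix_matrix_mult_def vec_eq_iff sum.distrib algebra_simps scaleR_sum_right)

lemma bilin_mv: "bounded_bilinear (\<lambda>(A::complex^'n^'m) (x::complex^'n). A *v x)"
  unfolding bilinear_conv_bounded_bilinear[symmetric] bilinear_def linear_iff
  by (simp add: matrix_vector_mult_def vec_eq_iff sum.distrib algebra_simps scaleR_sum_right)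

lemma bilin_cinner: "bounded_bilinear (\<lambda>(x::complex^'n) (y::complex^'n). cinner x y)"
  unfolding bilinear_conv_bounded_bilinear[symmetric] bilinear_def linear_iff
  by (simp add: cinner_def sum.distrib algebra_simps scaleR_sum_right)

lemma lin_adj: "bounded_linear (adj :: complex^'n^'m \<Rightarrow> _)"
  unfolding linear_conv_bounded_linear[symmetric] linear_iff
  by (simp add: adj_def vec_eq_iff)

lemma norm_le_sum_vec: "norm (x::'a::real_normed_vector^'n) \<le> (\<Sum>i\<in>UNIV. norm (x$i))"
  unfolding norm_vec_def by (rule L2_set_le_sum) simp

lemma mat_entry_le: "norm (M $ i $ j) \<le> onorm (\<lambda>x. (M::complex^'n^'m) *v x)"
proof -
  have bl: "bounded_linear (\<lambda>x. M *v x)" using bounded_bilinear.bounded_linear_right[OF bilin_mv] .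
  have "M $ i $ j = (M *v axis j 1) $ i"
    by (simp add: matrix_vector_mult_def axis_def if_distrib if_distribR cong: if_cong)
  then have "norm (M $ i $ j) \<le> norm (M *v axis j 1)" using Finite_Cartesian_Product.norm_nth_le[of "M *v axis j 1" i] by simp
  also have "\<dots> \<le> onorm (\<lambda>x. M *v x) * norm (axis j (1::complex))" by (rule onorm[OF bl])
  also have "norm (axis j (1::complex)) = 1" unfolding norm_vec_def L2_set_def axis_def
    by (simp add: if_distrib[of norm] if_distrib[of "\<lambda>x. x^2"] cong: if_cong)
  finally show ?thesis by simp
qed

lemma linear_funpow: "linear (\<Phi>::'v::real_vector \<Rightarrow> 'v) \<Longrightarrow> linear (\<Phi>^^n)"
proof (induction n)
  case 0 then show ?case by (simp add: linear_id[unfolded id_def])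
next
  case (Suc n) then show ?case by (metis funpow.simps(2) linear_compose)
qed

lemma mean_ergodic:
  fixes \<Phi> :: "'v::euclidean_space \<Rightarrow> 'v"
  assumes lin: "linear \<Phi>" and bnd: "\<And>x. bounded (range (\<lambda>n. (\<Phi>^^n) x))"
  shows "\<exists>u w. \<Phi> u = u \<and> e = u + \<Phi> w - w \<and>
           (\<lambda>n. (1 / real n) *\<^sub>R (\<Sum>j=1..n. (\<Phi>^^j) e)) \<longlonglongrightarrow> u"
proof -
  define Cs where "Cs n = (1 / real n) *\<^sub>R (\<Sum>j=1..n. (\<Phi>^^j) e)" for n
  have blin: "bounded_linear \<Phi>" using lin linear_conv_bounded_linear by blast
  have linp: "linear (\<Phi>^^n)" for n using linear_funpow[OF lin] .
  have diffbound: "(\<lambda>n. (1 / real n) *\<^sub>R ((\<Phi>^^(Suc n)) x - \<Phi> x)) \<longlonglongrightarrow> 0" for x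
  proof -
    obtain b where b: "b > 0" "\<And>n. norm ((\<Phi>^^n) x) \<le> b"
      using bnd[of x] unfolding bounded_pos by auto
    have "norm ((1 / real n) *\<^sub>R ((\<Phi>^^(Suc n)) x - \<Phi> x)) \<le> (2*b) / real n" for n
    proof -
      have f1: "(\<Phi>^^1) x = \<Phi> x" by simp
      have "norm ((\<Phi>^^(Suc n)) x - \<Phi> x) \<le> norm ((\<Phi>^^(Suc n)) x) + norm ((\<Phi>^^1) x)"
        unfolding f1 by (rule norm_triangle_ineq4)
      also have "\<dots> \<le> 2*b" using b(2)[of "Suc n"] b(2)[of 1] by simp
      finally show ?thesis by (simp add: divide_simps mult.commute)
    qed
    then have A: "\<forall>n. norm ((1 / real n) *\<^sub>R ((\<Phi>^^(Suc n)) x - \<Phi> x)) \<le> (2*b) / real n" by blast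
    have B: "(\<lambda>n. (2*b) / real n) \<longlonglongrightarrow> 0" by (rule lim_const_over_n)
    show ?thesis
      by (rule Lim_null_comparison[where g="\<lambda>n. 2*b/real n", OF always_eventually[OF A] B])
  qed
  obtain b where b: "b > 0" "\<And>n. norm ((\<Phi>^^n) e) \<le> b"
    using bnd[of e] unfolding bounded_pos by auto
  have Csb: "norm (Cs n) \<le> b" for n
  proof (cases "n = 0")
    case True then show ?thesis using b by (simp add: Cs_def)
  next
    case False
    have "norm (\<Sum>j=1..n. (\<Phi>^^j) e) \<le> (\<Sum>j=1..n. b)"
      by (rule order_trans[OF norm_sum sum_mono]) (rule b(2))
    then have "norm (\<Sum>j=1..n. (\<Phi>^^j) e) \<le> real n * b" by simp
    then show ?thesis using False by (simp add: Cs_def divide_simps mult.commute)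
  qed
  then have "bounded (range Cs)" by (auto simp: bounded_iff)
  then obtain u r where r: "strict_mono r" "(Cs \<circ> r) \<longlonglongrightarrow> u"
    using bounded_imp_convergent_subsequence by blast
  have PhiCs: "\<Phi> (Cs n) - Cs n = (1 / real n) *\<^sub>R ((\<Phi>^^(Suc n)) e - \<Phi> e)" for n
  proof -
    have "\<Phi> (Cs n) - Cs n = (1 / real n) *\<^sub>R ((\<Sum>j=1..n. (\<Phi>^^(Suc j)) e) - (\<Sum>j=1..n. (\<Phi>^^j) e))"
      by (simp add: Cs_def linear_scale[OF lin] linear_sum[OF lin] scaleR_diff_right)
    also have "(\<Sum>j=1..n. (\<Phi>^^(Suc j)) e) - (\<Sum>j=1..n. (\<Phi>^^j) e) = (\<Phi>^^(Suc n)) e - \<Phi> e"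
      using sum_Suc_diff[of 1 n "\<lambda>j. (\<Phi>^^j) e"] by (simp add: sum_subtractf)
    finally show ?thesis .
  qed
  have "(\<lambda>n. \<Phi> (Cs n) - Cs n) \<longlonglongrightarrow> 0" unfolding PhiCs by (rule diffbound)
  then have "(\<lambda>k. \<Phi> (Cs (r k)) - Cs (r k)) \<longlonglongrightarrow> 0"
    using LIMSEQ_subseq_LIMSEQ[OF _ r(1)] by (simp add: o_def)
  moreover have "(\<lambda>k. \<Phi> (Cs (r k)) - Cs (r k)) \<longlonglongrightarrow> \<Phi> u - u"
    using r(2) by (intro tendsto_intros bounded_linear.tendsto[OF blin]) (simp_all add: o_def)
  ultimately have "\<Phi> u - u = 0" using LIMSEQ_unique by blast
  then have fix_u: "\<Phi> u = u" by simp
  define R where "R = {v. \<exists>w. v = \<Phi> w - w}"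
  have subR: "subspace R"
    unfolding subspace_def R_def
  proof (intro conjI allI ballI impI)
    show "0 \<in> {v. \<exists>w. v = \<Phi> w - w}" by (rule CollectI, rule exI[of _ 0]) (simp add: linear_0[OF lin])
  next
    fix x y assume "x \<in> {v. \<exists>w. v = \<Phi> w - w}" "y \<in> {v. \<exists>w. v = \<Phi> w - w}"
    then obtain a b where "x = \<Phi> a - a" "y = \<Phi> b - b" by auto
    then show "x + y \<in> {v. \<exists>w. v = \<Phi> w - w}"
      by (intro CollectI exI[of _ "a + b"]) (simp add: linear_add[OF lin])
  next
    fix c :: real and x assume "x \<in> {v. \<exists>w. v = \<Phi> w - w}"
    then obtain a where "x = \<Phi> a - a" by auto
    then show "c *\<^sub>R x \<in> {v. \<exists>w. v = \<Phi> w - w}"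
      by (intro CollectI exI[of _ "c *\<^sub>R a"]) (simp add: linear_scale[OF lin] scaleR_diff_right)
  qed
  have eR: "e - (\<Phi>^^j) e \<in> R" for j
  proof -
    have "(\<Sum>k<j. (\<Phi>^^(Suc k)) e - (\<Phi>^^k) e) = (\<Phi>^^j) e - e"
      using sum_lessThan_telescope[of "\<lambda>k. (\<Phi>^^k) e" j] by simp
    moreover have "(\<Sum>k<j. (\<Phi>^^(Suc k)) e - (\<Phi>^^k) e) \<in> R"
      by (rule subspace_sum[OF subR]) (auto simp: R_def)
    ultimately have "(\<Phi>^^j) e - e \<in> R" by simp
    then have "- ((\<Phi>^^j) e - e) \<in> R" by (rule subspace_neg[OF subR])
    then show ?thesis by simp
  qed
  have eCs: "e - Cs n \<in> R" if "n \<ge> 1" for n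
  proof -
    have "(\<Sum>j=1..n. e - (\<Phi>^^j) e) = real n *\<^sub>R e - (\<Sum>j=1..n. (\<Phi>^^j) e)"
      by (simp add: sum_subtractf sum_constant_scaleR)
    then have "e - Cs n = (1 / real n) *\<^sub>R (\<Sum>j=1..n. e - (\<Phi>^^j) e)"
      using that by (simp add: Cs_def scaleR_diff_right)
    moreover have "(1 / real n) *\<^sub>R (\<Sum>j=1..n. e - (\<Phi>^^j) e) \<in> R"
      by (intro subspace_scale[OF subR] subspace_sum[OF subR] eR)
    ultimately show ?thesis by simp
  qed
  have "e - u \<in> R"
  proof (rule Lim_in_closed_set[of R "\<lambda>k. e - Cs (r k)" sequentially])
    show "closed R" by (rule closed_subspace[OF subR])
    show "eventually (\<lambda>k. e - Cs (r k) \<in> R) sequentially"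
      unfolding eventually_sequentially
    proof (intro exI allI impI)
      fix k :: nat assume "k \<ge> 1"
      moreover have "k \<le> r k" using r(1) by (rule seq_suble)
      ultimately show "e - Cs (r k) \<in> R" by (intro eCs) simp
    qed
    show "(\<lambda>k. e - Cs (r k)) \<longlonglongrightarrow> e - u" using r(2) by (intro tendsto_intros) (simp add: o_def)
  qed simp
  then obtain w where w: "e - u = \<Phi> w - w" by (auto simp: R_def)
  then have ew: "e = u + \<Phi> w - w" by (simp add: algebra_simps)
  have fixp: "(\<Phi>^^j) u = u" for j by (induction j) (simp_all add: fix_u)
  have Pj: "(\<Phi>^^j) e = u + ((\<Phi>^^(Suc j)) w - (\<Phi>^^j) w)" for j
    unfolding ew
    by (simp add: linear_add[OF linp] linear_diff[OF linp] fixp funpow_swap1)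
  have Cs_eq: "Cs n = u + (1 / real n) *\<^sub>R ((\<Phi>^^(Suc n)) w - \<Phi> w)" if "n \<ge> 1" for n
  proof -
    have "(\<Sum>j=1..n. (\<Phi>^^j) e) = real n *\<^sub>R u + ((\<Phi>^^(Suc n)) w - \<Phi> w)"
      unfolding Pj sum.distrib using sum_Suc_diff[of 1 n "\<lambda>j. (\<Phi>^^j) w"] by (simp add: sum_constant_scaleR)
    then show ?thesis using that by (simp add: Cs_def scaleR_add_right)
  qed
  have "(\<lambda>n. u + (1 / real n) *\<^sub>R ((\<Phi>^^(Suc n)) w - \<Phi> w)) \<longlonglongrightarrow> u + 0"
    by (intro tendsto_intros diffbound)
  then have L: "(\<lambda>n. u + (1 / real n) *\<^sub>R ((\<Phi>^^(Suc n)) w - \<Phi> w)) \<longlonglongrightarrow> u" by simp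
  have E: "eventually (\<lambda>n. u + (1 / real n) *\<^sub>R ((\<Phi>^^(Suc n)) w - \<Phi> w) = Cs n) sequentially"
    unfolding eventually_sequentially using Cs_eq by (intro exI[of _ 1]) auto
  have "Cs \<longlonglongrightarrow> u" by (rule Lim_transform_eventually[OF L E])
  then show ?thesis using fix_u ew unfolding Cs_def by blast
qed

lemma Phi_pow: "((\<lambda>X. adj T ** X ** T) ^^ n) X = adj (matpow T n) ** X ** matpow T n"
proof (induction n)
  case 0 then show ?case by simp
next
  case (Suc n)
  show ?case
    by (simp only: funpow.simps(2) o_apply Suc.IH matpow_Suc' adj_mult matrix_mul_assoc)
qed

lemma pb_bound:
  fixes T :: "complex^'n^'n"
  assumes "power_bounded T"
  shows "\<exists>B. \<forall>n. norm (matpow T n) \<le> B"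
proof -
  obtain M where M: "\<And>k. onorm (\<lambda>x. matpow T k *v x) \<le> M"
    using assms unfolding power_bounded_def bdd_above_def by auto
  have "norm (matpow T n) \<le> (\<Sum>i\<in>(UNIV::'n set). \<Sum>j\<in>(UNIV::'n set). M)" for n
  proof -
    have "norm (matpow T n) \<le> (\<Sum>i\<in>UNIV. norm (matpow T n $ i))" by (rule norm_le_sum_vec)
    also have "\<dots> \<le> (\<Sum>i\<in>UNIV. \<Sum>j\<in>UNIV. norm (matpow T n $ i $ j))"
      by (intro sum_mono norm_le_sum_vec)
    also have "\<dots> \<le> (\<Sum>i\<in>(UNIV::'n set). \<Sum>j\<in>(UNIV::'n set). M)"
      by (intro sum_mono order_trans[OF mat_entry_le M])
    finally show ?thesis .
  qed
  then show ?thesis by blast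
qed

lemma banach_shift:
  assumes L: "banach_limit L" and s: "bounded (range s)"
  shows "L (\<lambda>n. c + (s (Suc n) - s n)) = c"
proof -
  note D = L[unfolded banach_limit_def]
  have lin: "\<And>x y a b. bounded (range x) \<Longrightarrow> bounded (range y) \<Longrightarrow>
         L (\<lambda>n. a * x n + b * y n) = a * L x + b * L y"
    by (rule D[THEN conjunct1, rule_format])
  have conv: "\<And>x. convergent x \<Longrightarrow> L x = lim x"
    by (rule D[THEN conjunct2, THEN conjunct2, THEN conjunct2, THEN conjunct1, rule_format])
  have sh: "\<And>x. bounded (range x) \<Longrightarrow> L (\<lambda>n. x (Suc n)) = L x"
    by (rule D[THEN conjunct2, THEN conjunct2, THEN conjunct2, THEN conjunct2, THEN conjunct2, rule_format])
  obtain b where b: "\<And>n. norm (s n) \<le> b" using s unfolding bounded_iff by blast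
  have bs: "bounded (range (\<lambda>n. s (Suc n)))" using b unfolding bounded_iff by blast
  have bd: "bounded (range (\<lambda>n. s (Suc n) - s n))"
    unfolding bounded_iff
  proof (rule exI[of _ "b + b"], intro ballI)
    fix z assume "z \<in> range (\<lambda>n. s (Suc n) - s n)"
    then obtain n where z: "z = s (Suc n) - s n" by auto
    have "norm (s (Suc n) - s n) \<le> norm (s (Suc n)) + norm (s n)" by (rule norm_triangle_ineq4)
    also have "\<dots> \<le> b + b" by (intro add_mono b)
    finally show "norm z \<le> b + b" unfolding z .
  qed
  have bc: "bounded (range (\<lambda>n::nat. c))" unfolding bounded_iff by auto
  have "L (\<lambda>n. c + (s (Suc n) - s n)) = L (\<lambda>n. 1 * c + 1 * (s (Suc n) - s n))" by simp
  also have "\<dots> = 1 * L (\<lambda>n. c) + 1 * L (\<lambda>n. s (Suc n) - s n)" by (rule lin[OF bc bd])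
  also have "L (\<lambda>n. c) = c" using conv[OF convergent_const] by simp
  also have "L (\<lambda>n. s (Suc n) - s n) = L (\<lambda>n. 1 * s (Suc n) + (-1) * s n)" by simp
  also have "\<dots> = 1 * L (\<lambda>n. s (Suc n)) + (-1) * L s" by (rule lin[OF bs s])
  also have "\<dots> = 0" using sh[OF s] by simp
  finally show ?thesis by simp
qed

lemma mm_bound: "\<exists>K>0. \<forall>(A::complex^'n^'m) (B::complex^'p^'n). norm (A ** B) \<le> K * norm A * norm B"
  using bounded_bilinear.pos_bounded[OF bilin_mm] by (metis mult.commute mult.left_commute)

lemma bnd_Phi:
  fixes T :: "complex^'n^'n"
  assumes "power_bounded T"
  shows "bounded (range (\<lambda>n. adj (matpow T n) ** X ** matpow T n))"
proof -
  obtain B where B: "\<And>n. norm (matpow T n) \<le> B" using pb_bound[OF assms] by blast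
  obtain K where K: "K > 0" "\<And>A B. norm ((A::complex^'n^'n) ** (B::complex^'n^'n)) \<le> K * norm A * norm B"
    using mm_bound by blast
  obtain Ka where Ka: "Ka > 0" "\<And>A. norm (adj (A::complex^'n^'n)) \<le> norm A * Ka"
    using bounded_linear.pos_bounded[OF lin_adj] by blast
  have B0: "0 \<le> B" using B[of 0] norm_ge_zero order_trans by blast
  have "norm (adj (matpow T n) ** X ** matpow T n) \<le> K * (K * (B * Ka) * norm X) * B" for n
  proof -
    have a: "norm (adj (matpow T n)) \<le> B * Ka"
      using Ka(2)[of "matpow T n"] B[of n] Ka(1) by (meson mult_right_mono less_imp_le order_trans)
    have "norm (adj (matpow T n) ** X ** matpow T n) \<le> K * norm (adj (matpow T n) ** X) * norm (matpow T n)"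
      by (rule K(2))
    also have "\<dots> \<le> K * (K * (B * Ka) * norm X) * B"
    proof (intro mult_mono mult_left_mono)
      show "norm (adj (matpow T n) ** X) \<le> K * (B * Ka) * norm X"
        using K(2)[of "adj (matpow T n)" X] a K(1)
        by (meson mult_left_mono mult_right_mono less_imp_le norm_ge_zero order_trans)
    qed (use K B B0 Ka in \<open>auto intro!: mult_nonneg_nonneg\<close>)
    finally show ?thesis .
  qed
  then show ?thesis unfolding bounded_iff by blast
qed

lemma part1:
  fixes T :: "complex^'n^'n"
  assumes pb: "power_bounded T"
  shows "\<exists>A. cesaro T \<longlonglongrightarrow> A \<and>
                 (\<forall>L. banach_limit L \<longrightarrow>
                    (\<forall>x y. L (\<lambda>n. cinner ((adj (matpow T n) ** matpow T n) *v x) y)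
                           = cinner (A *v x) y))"
proof -
  define \<Phi> where "\<Phi> = (\<lambda>X. adj T ** X ** T)"
  have lin: "linear \<Phi>"
  proof -
    have "bounded_linear (\<lambda>X. (adj T ** X) ** T)"
      by (rule bounded_linear_compose[OF bounded_bilinear.bounded_linear_left[OF bilin_mm]
          bounded_bilinear.bounded_linear_right[OF bilin_mm]])
    then show ?thesis unfolding \<Phi>_def by (rule bounded_linear.linear)
  qed
  have bnd: "bounded (range (\<lambda>n. (\<Phi>^^n) X))" for X
    unfolding \<Phi>_def Phi_pow using bnd_Phi[OF pb] .
  obtain u w where uw: "\<Phi> u = u" "mat 1 = u + \<Phi> w - w"
    and lim: "(\<lambda>n. (1 / real n) *\<^sub>R (\<Sum>j=1..n. (\<Phi>^^j) (mat 1))) \<longlonglongrightarrow> u"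
    using mean_ergodic[OF lin bnd, of "mat 1"] by blast
  have ces: "cesaro T = (\<lambda>n. (1 / real n) *\<^sub>R (\<Sum>j=1..n. (\<Phi>^^j) (mat 1)))"
    unfolding cesaro_def \<Phi>_def Phi_pow by simp
  have linp: "linear (\<Phi>^^n)" for n using linear_funpow[OF lin] .
  have fixp: "(\<Phi>^^j) u = u" for j by (induction j) (simp_all add: uw(1))
  have BL: "L (\<lambda>n. cinner ((adj (matpow T n) ** matpow T n) *v x) y) = cinner (u *v x) y"
    if L: "banach_limit L" for L x y
  proof -
    define f where "f X = cinner (X *v x) y" for X :: "complex^'n^'n"
    have bf: "bounded_linear f"
      unfolding f_def
      by (rule bounded_linear_compose[OF bounded_bilinear.bounded_linear_left[OF bilin_cinner]
            bounded_bilinear.bounded_linear_left[OF bilin_mv]])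
    have eq: "cinner ((adj (matpow T n) ** matpow T n) *v x) y
        = f u + (f ((\<Phi>^^(Suc n)) w) - f ((\<Phi>^^n) w))" for n
    proof -
      have "adj (matpow T n) ** matpow T n = (\<Phi>^^n) (mat 1)"
        unfolding \<Phi>_def Phi_pow by simp
      also have "\<dots> = u + ((\<Phi>^^(Suc n)) w - (\<Phi>^^n) w)"
        by (subst uw(2)) (simp add: linear_add[OF linp] linear_diff[OF linp] fixp funpow_swap1)
      finally show ?thesis
        by (simp add: f_def[symmetric] linear_add[OF bounded_linear.linear[OF bf]]
             linear_diff[OF bounded_linear.linear[OF bf]])
    qed
    have bs: "bounded (range (\<lambda>n. f ((\<Phi>^^n) w)))"
      using bounded_linear_image[OF bnd[of w] bf] by (simp add: image_image)
    have e2: "(\<lambda>n. cinner ((adj (matpow T n) ** matpow T n) *v x) y)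
       = (\<lambda>n. f u + (f ((\<Phi>^^(Suc n)) w) - f ((\<Phi>^^n) w)))" using eq by simp
    have "L (\<lambda>n. f u + (f ((\<Phi>^^(Suc n)) w) - f ((\<Phi>^^n) w))) = f u" by (rule banach_shift[OF L bs])
    then show ?thesis unfolding e2 f_def .
  qed
  show ?thesis using lim BL unfolding ces[symmetric] by blast
qed

lemma mv_bound: "\<exists>K>0. \<forall>(M::complex^'n^'m) y. norm (M *v y) \<le> K * norm M * norm y"
  using bounded_bilinear.pos_bounded[OF bilin_mv] by (metis mult.commute mult.left_commute)

lemma ci_bound: "\<exists>K>0. \<forall>(a::complex^'n) b. norm (cinner a b) \<le> K * norm a * norm b"
  using bounded_bilinear.pos_bounded[OF bilin_cinner] by (metis mult.commute mult.left_commute)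

lemma cq_bound: "\<exists>K>0. \<forall>(M::complex^'n^'m) a b. norm (cinner (M *v a) b) \<le> K * norm M * norm a * norm b"
proof -
  obtain Kv where Kv: "Kv > 0" "\<And>(M::complex^'n^'m) y. norm (M *v y) \<le> Kv * norm M * norm y"
    using mv_bound by blast
  obtain Kc where Kc: "Kc > 0" "\<And>(a::complex^'m) b. norm (cinner a b) \<le> Kc * norm a * norm b"
    using ci_bound by blast
  have "norm (cinner (M *v a) b) \<le> (Kc * Kv) * norm M * norm a * norm b" for M :: "complex^'n^'m" and a b
  proof -
    have "norm (cinner (M *v a) b) \<le> Kc * norm (M *v a) * norm b" by (rule Kc(2))
    also have "\<dots> \<le> Kc * (Kv * norm M * norm a) * norm b"
      using Kv(2)[of M a] Kc(1) by (intro mult_right_mono mult_left_mono) auto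
    finally show ?thesis by (simp add: mult_ac)
  qed
  then show ?thesis using Kc(1) Kv(1) by (intro exI[of _ "Kc * Kv"]) auto
qed

definition Rq :: "complex^'n^'n \<Rightarrow> complex^'n \<Rightarrow> real" where
  "Rq M y = Re (cinner (M *v y) y)"

lemma Rq_scale: "Rq M (c *\<^sub>R y) = c^2 * Rq M y"
  unfolding Rq_def
  by (simp add: bounded_bilinear.scaleR_right[OF bilin_mv] bounded_bilinear.scaleR_right[OF bilin_cinner]
      bounded_bilinear.scaleR_left[OF bilin_cinner] power2_eq_square)

lemma Rq_zero[simp]: "Rq M 0 = 0"
  unfolding Rq_def by (simp add: bounded_bilinear.zero_left[OF bilin_cinner])

lemma Rq_bound: "\<exists>K>0. \<forall>(M::complex^'n^'n) y z. \<bar>Rq M y\<bar> \<le> K * norm M * (norm y)^2 \<and>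
     \<bar>Rq M y - Rq M z\<bar> \<le> K * norm M * (norm y + norm z) * norm (y - z)"
proof -
  obtain K where K: "K > 0" "\<And>(M::complex^'n^'n) a b. norm (cinner (M *v a) b) \<le> K * norm M * norm a * norm b"
    using cq_bound by blast
  have "\<bar>Rq M y\<bar> \<le> K * norm M * (norm y)^2 \<and>
     \<bar>Rq M y - Rq M z\<bar> \<le> K * norm M * (norm y + norm z) * norm (y - z)" for M :: "complex^'n^'n" and y z
  proof
    show "\<bar>Rq M y\<bar> \<le> K * norm M * (norm y)^2"
      unfolding Rq_def using abs_Re_le_cmod[of "cinner (M *v y) y"] K(2)[of M y y]
      by (simp add: power2_eq_square mult_ac)
    have eq: "cinner (M *v y) y - cinner (M *v z) z = cinner (M *v (y - z)) y + cinner (M *v z) (y - z)"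
      by (simp add: bounded_bilinear.diff_right[OF bilin_mv] bounded_bilinear.diff_left[OF bilin_cinner]
          bounded_bilinear.diff_right[OF bilin_cinner])
    have "\<bar>Rq M y - Rq M z\<bar> = \<bar>Re (cinner (M *v y) y - cinner (M *v z) z)\<bar>" by (simp add: Rq_def)
    also have "\<dots> \<le> norm (cinner (M *v (y - z)) y + cinner (M *v z) (y - z))"
      unfolding eq by (rule abs_Re_le_cmod)
    also have "\<dots> \<le> norm (cinner (M *v (y - z)) y) + norm (cinner (M *v z) (y - z))"
      by (rule norm_triangle_ineq)
    also have "\<dots> \<le> K * norm M * norm (y - z) * norm y + K * norm M * norm z * norm (y - z)"
      by (intro add_mono K(2))
    also have "\<dots> = K * norm M * (norm y + norm z) * norm (y - z)" by (simp add: algebra_simps)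
    finally show "\<bar>Rq M y - Rq M z\<bar> \<le> K * norm M * (norm y + norm z) * norm (y - z)" .
  qed
  then show ?thesis using K(1) by blast
qed

lemma cinner_mm: "cinner ((adj M ** M) *v y) y = complex_of_real ((norm (M *v y))^2)"
  by (simp add: matrix_vector_mul_assoc[symmetric] cinner_adj cinner_self)

lemma entry_le_mv: "norm ((M::complex^'n^'m) $ i $ j) \<le> norm (M *v axis j 1)"
proof -
  have "M $ i $ j = (M *v axis j 1) $ i"
    by (simp add: matrix_vector_mult_def axis_def if_distrib if_distribR cong: if_cong)
  then show ?thesis using Finite_Cartesian_Product.norm_nth_le[of "M *v axis j 1" i] by simp
qed

lemma Rq_cesaro: "Rq (cesaro T n) y = (1 / real n) * (\<Sum>j=1..n. (norm (matpow T j *v y))^2)"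
  unfolding Rq_def cesaro_def
  by (simp add: bounded_bilinear.scaleR_left[OF bilin_mv] bounded_bilinear.sum_left[OF bilin_mv]
      bounded_bilinear.scaleR_left[OF bilin_cinner] bounded_bilinear.sum_left[OF bilin_cinner]
      cinner_mm Re_sum)

lemma part2:
  fixes T :: "complex^'n^'n"
  assumes conv: "convergent (cesaro T)"
  shows "power_bounded T"
proof -
  obtain A where lim: "cesaro T \<longlonglongrightarrow> A" using conv unfolding convergent_def by blast
  define P where "P = matpow T"
  define p where "p j y = (norm (P j *v y))^2" for j y
  define q where "q n y = Rq (cesaro T n) y" for n y
  define Q where "Q y = Rq A y" for y
  have q_eq: "q n y = (1 / real n) * (\<Sum>j=1..n. p j y)" for n y
    unfolding q_def p_def P_def by (rule Rq_cesaro)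
  have nq: "real n * q n y = (\<Sum>j=1..n. p j y)" for n y
    by (cases "n = 0") (simp_all add: q_eq)
  obtain K0 where K0: "K0 > 0" "\<And>n. norm (cesaro T n) \<le> K0"
    using convergent_imp_Bseq[OF conv] unfolding Bseq_def by blast
  obtain Kq where Kq: "Kq > 0" "\<And>(M::complex^'n^'n) y z. \<bar>Rq M y\<bar> \<le> Kq * norm M * (norm y)^2"
     "\<And>(M::complex^'n^'n) y z. \<bar>Rq M y - Rq M z\<bar> \<le> Kq * norm M * (norm y + norm z) * norm (y - z)"
    using Rq_bound by blast
  have q_le: "q n y \<le> (Kq * K0) * (norm y)^2" for n y
  proof -
    have "q n y \<le> Kq * norm (cesaro T n) * (norm y)^2" using Kq(2)[of "cesaro T n" y] unfolding q_def by linarith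
    also have "\<dots> \<le> Kq * K0 * (norm y)^2"
      using K0(2)[of n] Kq(1) by (intro mult_right_mono mult_left_mono) auto
    finally show ?thesis .
  qed
  have q_nonneg: "q n y \<ge> 0" for n y unfolding q_eq p_def by (simp add: sum_nonneg)
  have qQ: "(\<lambda>n. q n y) \<longlonglongrightarrow> Q y" for y
  proof -
    have t1: "(\<lambda>n. cesaro T n *v y) \<longlonglongrightarrow> A *v y"
      by (rule bounded_bilinear.tendsto[OF bilin_mv lim tendsto_const])
    have t2: "(\<lambda>n. cinner (cesaro T n *v y) y) \<longlonglongrightarrow> cinner (A *v y) y"
      by (rule bounded_bilinear.tendsto[OF bilin_cinner t1 tendsto_const])
    show ?thesis unfolding q_def Q_def Rq_def by (rule tendsto_Re[OF t2])
  qed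
  have Q_nonneg: "Q y \<ge> 0" for y
    using LIMSEQ_le_const[OF qQ[of y]] q_nonneg by blast
  have pT: "p j (T *v y) = p (Suc j) y" for j y
    unfolding p_def P_def by (simp add: matrix_vector_mul_assoc matpow_Suc' del: matpow.simps(2))
  have QT: "Q (T *v y) = Q y" for y
  proof -
    have eq: "q n (T *v y) = q (Suc n) y + (q (Suc n) y - p 1 y) * (1 / real n)" if "n \<ge> 1" for n
    proof -
      have "(\<Sum>j=1..n. p j (T *v y)) = (\<Sum>j=1..n. p (Suc j) y)" by (simp add: pT)
      also have "\<dots> = (\<Sum>j=Suc 1..Suc n. p j y)" by (rule sum.shift_bounds_cl_Suc_ivl[symmetric])
      also have "\<dots> = (\<Sum>j=1..Suc n. p j y) - p 1 y" by (simp add: sum.atLeast_Suc_atMost)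
      finally have S: "(\<Sum>j=1..n. p j (T *v y)) = (\<Sum>j=1..Suc n. p j y) - p 1 y" .
      have "real n * q n (T *v y) = real (Suc n) * q (Suc n) y - p 1 y" unfolding nq by (rule S)
      then show ?thesis using that by (simp add: field_simps)
    qed
    have "(\<lambda>n. q (Suc n) y + (q (Suc n) y - p 1 y) * (1 / real n)) \<longlonglongrightarrow> Q y + (Q y - p 1 y) * 0"
      by (intro tendsto_intros LIMSEQ_Suc[OF qQ] lim_1_over_n)
    then have L: "(\<lambda>n. q (Suc n) y + (q (Suc n) y - p 1 y) * (1 / real n)) \<longlonglongrightarrow> Q y" by simp
    have E: "eventually (\<lambda>n. q (Suc n) y + (q (Suc n) y - p 1 y) * (1 / real n) = q n (T *v y)) sequentially"
      unfolding eventually_sequentially using eq by (intro exI[of _ 1]) auto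
    have "(\<lambda>n. q n (T *v y)) \<longlonglongrightarrow> Q y" by (rule Lim_transform_eventually[OF L E])
    then show ?thesis using qQ[of "T *v y"] LIMSEQ_unique by blast
  qed
  have QP: "Q (P k *v x) = Q x" for k x
  proof (induction k)
    case 0 then show ?case by (simp add: P_def)
  next
    case (Suc k)
    have "P (Suc k) *v x = T *v (P k *v x)" by (simp add: P_def matrix_vector_mul_assoc)
    then show ?case using QT Suc by simp
  qed
  have Q_cont: "(\<lambda>k. Q (Y k)) \<longlonglongrightarrow> Q z" if Yz: "Y \<longlonglongrightarrow> z" for Y z
  proof -
    have t1: "(\<lambda>k. A *v Y k) \<longlonglongrightarrow> A *v z"
      by (rule bounded_bilinear.tendsto[OF bilin_mv tendsto_const Yz])
    have t2: "(\<lambda>k. cinner (A *v Y k) (Y k)) \<longlonglongrightarrow> cinner (A *v z) z"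
      by (rule bounded_bilinear.tendsto[OF bilin_cinner t1 Yz])
    show ?thesis unfolding Q_def Rq_def by (rule tendsto_Re[OF t2])
  qed
  have claim: "\<exists>m\<ge>1. \<exists>c>0. \<forall>y. q m y \<le> 1/4 * (norm y)^2 + c * Q y"
  proof (rule ccontr)
    assume neg: "\<not> ?thesis"
    have "\<forall>k. \<exists>y. q (Suc k) y > 1/4 * (norm y)^2 + real (Suc k) * Q y"
    proof
      fix k
      show "\<exists>y. q (Suc k) y > 1/4 * (norm y)^2 + real (Suc k) * Q y"
      proof (rule ccontr)
        assume "\<not> (\<exists>y. q (Suc k) y > 1/4 * (norm y)^2 + real (Suc k) * Q y)"
        then have h: "\<forall>y. q (Suc k) y \<le> 1/4 * (norm y)^2 + real (Suc k) * Q y" by (auto simp: not_less)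
        have "\<exists>m\<ge>1. \<exists>c>0. \<forall>y. q m y \<le> 1/4 * (norm y)^2 + c * Q y"
          by (rule exI[of _ "Suc k"], rule conjI, simp, rule exI[of _ "real (Suc k)"]) (use h in simp)
        then show False using neg by blast
      qed
    qed
    then obtain Y where Y0': "\<forall>k. q (Suc k) (Y k) > 1/4 * (norm (Y k))^2 + real (Suc k) * Q (Y k)"
      by (rule choice[THEN exE]) blast
    have Y: "\<And>k. q (Suc k) (Y k) > 1/4 * (norm (Y k))^2 + real (Suc k) * Q (Y k)" using Y0' by blast
    have Y0: "Y k \<noteq> 0" for k
    proof
      assume "Y k = 0"
      then show False using Y[of k] by (simp add: q_def Q_def)
    qed
    define Z where "Z k = (1 / norm (Y k)) *\<^sub>R Y k" for k
    have nZ: "norm (Z k) = 1" for k unfolding Z_def using Y0[of k] by simp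
    have Zi: "q (Suc k) (Z k) > 1/4 + real (Suc k) * Q (Z k)" for k
    proof -
      define s where "s = 1 / norm (Y k)"
      have s0: "s > 0" unfolding s_def using Y0[of k] by simp
      have qs: "q (Suc k) (Z k) = s^2 * q (Suc k) (Y k)" unfolding Z_def s_def[symmetric] q_def by (rule Rq_scale)
      have Qs: "Q (Z k) = s^2 * Q (Y k)" unfolding Z_def s_def[symmetric] Q_def by (rule Rq_scale)
      have ns: "s^2 * (norm (Y k))^2 = 1" unfolding s_def using Y0[of k] by (simp add: field_simps)
      have "s^2 * (1/4 * (norm (Y k))^2 + real (Suc k) * Q (Y k)) < s^2 * q (Suc k) (Y k)"
        using Y[of k] s0 by (intro mult_strict_left_mono) auto
      then show ?thesis unfolding qs Qs using ns by (simp add: algebra_simps)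
    qed
    have QZ: "Q (Z k) \<le> (Kq * K0) / real (Suc k)" for k
    proof -
      have "real (Suc k) * Q (Z k) \<le> Kq * K0"
        using Zi[of k] q_le[of "Suc k" "Z k"] nZ[of k] by simp
      then show ?thesis by (simp add: field_simps)
    qed
    have "bounded (range Z)" using nZ unfolding bounded_iff by auto
    then obtain z r where r: "strict_mono r" "(Z \<circ> r) \<longlonglongrightarrow> z"
      using bounded_imp_convergent_subsequence by blast
    have Zr: "(\<lambda>k. Z (r k)) \<longlonglongrightarrow> z" using r(2) by (simp add: o_def)
    have "(\<lambda>k. Q (Z (r k))) \<longlonglongrightarrow> 0"
    proof (rule Lim_null_comparison[where g="\<lambda>k. (Kq * K0) / real (Suc k)"])
      show "\<forall>\<^sub>F k in sequentially. norm (Q (Z (r k))) \<le> Kq * K0 / real (Suc k)"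
      proof (rule always_eventually, rule allI)
        fix k
        have "k \<le> r k" using r(1) by (rule seq_suble)
        then have "(Kq * K0) / real (Suc (r k)) \<le> (Kq * K0) / real (Suc k)"
          using Kq(1) K0(1) by (intro divide_left_mono) auto
        then show "norm (Q (Z (r k))) \<le> Kq * K0 / real (Suc k)"
          using QZ[of "r k"] Q_nonneg[of "Z (r k)"] by simp
      qed
      show "(\<lambda>k. Kq * K0 / real (Suc k)) \<longlonglongrightarrow> 0"
        by (rule LIMSEQ_Suc[OF lim_const_over_n])
    qed
    moreover have "(\<lambda>k. Q (Z (r k))) \<longlonglongrightarrow> Q z" by (rule Q_cont[OF Zr])
    ultimately have Qz: "Q z = 0" using LIMSEQ_unique by blast
    have sm: "strict_mono (\<lambda>k. Suc (r k))" using r(1) unfolding strict_mono_def by simp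
    have "((\<lambda>n. q n z) \<circ> (\<lambda>k. Suc (r k))) \<longlonglongrightarrow> Q z" by (rule LIMSEQ_subseq_LIMSEQ[OF qQ sm])
    then have qz: "(\<lambda>k. q (Suc (r k)) z) \<longlonglongrightarrow> 0" using Qz by (simp add: o_def)
    have dif: "(\<lambda>k. q (Suc (r k)) (Z (r k)) - q (Suc (r k)) z) \<longlonglongrightarrow> 0"
    proof (rule Lim_null_comparison[where g="\<lambda>k. (Kq * K0 * (1 + norm z)) * norm (Z (r k) - z)"])
      show "\<forall>\<^sub>F k in sequentially. norm (q (Suc (r k)) (Z (r k)) - q (Suc (r k)) z)
              \<le> Kq * K0 * (1 + norm z) * norm (Z (r k) - z)"
      proof (rule always_eventually, rule allI)
        fix k
        have "\<bar>q (Suc (r k)) (Z (r k)) - q (Suc (r k)) z\<bar>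
            \<le> Kq * norm (cesaro T (Suc (r k))) * (norm (Z (r k)) + norm z) * norm (Z (r k) - z)"
          unfolding q_def by (rule Kq(3))
        also have "\<dots> \<le> Kq * K0 * (1 + norm z) * norm (Z (r k) - z)"
        proof -
          have h1: "norm (cesaro T (Suc (r k))) * (norm (Z (r k)) + norm z) \<le> K0 * (1 + norm z)"
            unfolding nZ by (rule mult_right_mono[OF K0(2)]) simp
          have h2: "Kq * (norm (cesaro T (Suc (r k))) * (norm (Z (r k)) + norm z)) * norm (Z (r k) - z)
              \<le> Kq * (K0 * (1 + norm z)) * norm (Z (r k) - z)"
            by (rule mult_right_mono[OF mult_left_mono[OF h1]]) (use Kq(1) in auto)
          then show ?thesis by (simp add: mult.assoc)
        qed
        finally show "norm (q (Suc (r k)) (Z (r k)) - q (Suc (r k)) z)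
              \<le> Kq * K0 * (1 + norm z) * norm (Z (r k) - z)" by simp
      qed
      have "(\<lambda>k. norm (Z (r k) - z)) \<longlonglongrightarrow> norm (z - z)" by (intro tendsto_intros Zr)
      then have "(\<lambda>k. (Kq * K0 * (1 + norm z)) * norm (Z (r k) - z)) \<longlonglongrightarrow> (Kq * K0 * (1 + norm z)) * 0"
        by (intro tendsto_mult tendsto_const) simp
      then show "(\<lambda>k. (Kq * K0 * (1 + norm z)) * norm (Z (r k) - z)) \<longlonglongrightarrow> 0" by simp
    qed
    have "(\<lambda>k. (q (Suc (r k)) (Z (r k)) - q (Suc (r k)) z) + q (Suc (r k)) z) \<longlonglongrightarrow> 0 + 0"
      by (rule tendsto_add[OF dif qz])
    then have l0: "(\<lambda>k. q (Suc (r k)) (Z (r k))) \<longlonglongrightarrow> 0" by simp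
    have "1/4 \<le> (0::real)"
    proof (rule LIMSEQ_le_const[OF l0], intro exI allI impI)
      fix k :: nat
      show "1/4 \<le> q (Suc (r k)) (Z (r k))"
        using Zi[of "r k"] Q_nonneg[of "Z (r k)"] by (smt (verit) mult_nonneg_nonneg of_nat_0_le_iff)
    qed
    then show False by simp
  qed
  then obtain m c where mc: "m \<ge> 1" "c > 0" "\<And>y. q m y \<le> 1/4 * (norm y)^2 + c * Q y" by blast
  obtain Kv where Kv: "Kv > 0" "\<And>(M::complex^'n^'n) y. norm (M *v y) \<le> Kv * norm M * norm y"
    using mv_bound by blast
  have ptw: "\<exists>b. \<forall>t. norm (P t *v x) \<le> b" for x
  proof -
    define f where "f k = p k x" for k
    define \<alpha> where "\<alpha> = Q x"
    have a0: "\<alpha> \<ge> 0" unfolding \<alpha>_def by (rule Q_nonneg)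
    have f0: "f k \<ge> 0" for k unfolding f_def p_def by simp
    have step: "\<exists>j. 1 \<le> j \<and> j \<le> m \<and> f (j + k) \<le> f k / 4 + c * \<alpha>" for k
    proof (rule ccontr)
      assume "\<not> ?thesis"
      then have gt: "\<forall>j\<in>{1..m}. f k / 4 + c * \<alpha> < f (j + k)" by auto
      have pj: "p j (P k *v x) = f (j + k)" for j
        unfolding f_def p_def P_def by (simp add: matrix_vector_mul_assoc matpow_add)
      have e1: "q m (P k *v x) = (1 / real m) * (\<Sum>j=1..m. f (j + k))" unfolding q_eq pj ..
      have e2: "real m * q m (P k *v x) = (\<Sum>j=1..m. f (j + k))" unfolding e1 using mc(1) by simp
      have lt: "(\<Sum>j=1..m. f k / 4 + c * \<alpha>) < (\<Sum>j=1..m. f (j + k))"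
        by (rule sum_strict_mono) (use mc(1) gt in auto)
      have e3: "(\<Sum>j=1..m. f k / 4 + c * \<alpha>) = real m * (f k / 4 + c * \<alpha>)" by simp
      have "real m * (f k / 4 + c * \<alpha>) < real m * q m (P k *v x)" using lt unfolding e2 e3 .
      then have "q m (P k *v x) > f k / 4 + c * \<alpha>"
        using mc(1) by (subst (asm) mult_less_cancel_left_pos) auto
      moreover have "q m (P k *v x) \<le> f k / 4 + c * \<alpha>"
        using mc(3)[of "P k *v x"] unfolding QP f_def p_def \<alpha>_def by simp
      ultimately show False by simp
    qed
    define B where "B = f 0 + 4 * c * \<alpha>"
    have reach: "\<exists>k. f k \<le> B \<and> k \<le> t \<and> t < k + m" for t
    proof (induction t)
      case 0 then show ?case using mc(1) a0 mc(2) by (intro exI[of _ 0]) (simp add: B_def)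
    next
      case (Suc t)
      then obtain k where k: "f k \<le> B" "k \<le> t" "t < k + m" by blast
      show ?case
      proof (cases "Suc t < k + m")
        case True then show ?thesis using k by (intro exI[of _ k]) auto
      next
        case False
        then have tk: "Suc t = k + m" using k(3) by simp
        obtain j where j: "1 \<le> j" "j \<le> m" "f (j + k) \<le> f k / 4 + c * \<alpha>" using step by blast
        have ca: "c * \<alpha> \<ge> 0" using a0 mc(2) by simp
        have "f (j + k) \<le> B" using j(3) k(1) ca f0[of 0] unfolding B_def by linarith
        then show ?thesis using j tk by (intro exI[of _ "j + k"]) auto
      qed
    qed
    define D where "D = (\<Sum>r<m. norm (P r))"
    have "norm (P t *v x) \<le> Kv * D * sqrt B" for t
    proof -
      obtain k where k: "f k \<le> B" "k \<le> t" "t < k + m" using reach by blast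
      have "P t *v x = P (t - k) *v (P k *v x)"
        using k(2) by (simp add: P_def matrix_vector_mul_assoc matpow_add[symmetric])
      then have "norm (P t *v x) \<le> Kv * norm (P (t - k)) * norm (P k *v x)" using Kv(2) by simp
      also have "\<dots> \<le> Kv * D * sqrt B"
      proof -
        have h1: "norm (P (t - k)) \<le> D" unfolding D_def
          by (rule member_le_sum) (use k in auto)
        have h2: "norm (P k *v x) \<le> sqrt B"
          using k(1) unfolding f_def p_def by (intro real_le_rsqrt) simp
        have h3: "Kv * norm (P (t - k)) \<le> Kv * D" using h1 Kv(1) by simp
        have h4: "0 \<le> Kv * D" using h3 Kv(1) by (meson norm_ge_zero order_trans mult_nonneg_nonneg less_imp_le)
        show ?thesis by (rule mult_mono[OF h3 h2 h4 norm_ge_zero])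
      qed
      finally show ?thesis .
    qed
    then show ?thesis by blast
  qed
  then have "\<forall>j. \<exists>b. \<forall>t. norm (P t *v axis j 1) \<le> b" by blast
  then obtain Bf where Bf0: "\<forall>j. \<forall>t. norm (P t *v axis j 1) \<le> Bf j" by (rule choice[THEN exE]) blast
  have Bf: "\<And>j t. norm (P t *v axis j 1) \<le> Bf j" using Bf0 by blast
  define E where "E = (\<Sum>i\<in>(UNIV::'n set). \<Sum>j\<in>(UNIV::'n set). Bf j)"
  have nP: "norm (P t) \<le> E" for t
  proof -
    have "norm (P t) \<le> (\<Sum>i\<in>UNIV. norm (P t $ i))" by (rule norm_le_sum_vec)
    also have "\<dots> \<le> (\<Sum>i\<in>UNIV. \<Sum>j\<in>UNIV. norm (P t $ i $ j))"
      by (intro sum_mono norm_le_sum_vec)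
    also have "\<dots> \<le> E" unfolding E_def
      by (intro sum_mono order_trans[OF entry_le_mv Bf])
    finally show ?thesis .
  qed
  have "onorm (\<lambda>x. matpow T t *v x) \<le> Kv * E" for t
  proof (rule onorm_le)
    fix x :: "complex^'n"
    have "norm (P t *v x) \<le> Kv * norm (P t) * norm x" by (rule Kv(2))
    also have "\<dots> \<le> Kv * E * norm x" using nP[of t] Kv(1) by (intro mult_right_mono mult_left_mono) auto
    finally show "norm (matpow T t *v x) \<le> Kv * E * norm x" by (simp add: P_def)
  qed
  then show ?thesis unfolding power_bounded_def by (intro bdd_aboveI2)
qed

theorem mainTheorem6:
  fixes T :: "complex ^'n^'n"
  shows "(power_bounded T \<longrightarrow>
            (\<exists>A. cesaro T \<longlonglongrightarrow> A \<and>
                 (\<forall>L. banach_limit L \<longrightarrow>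
                    (\<forall>x y. L (\<lambda>n. cinner ((adj (matpow T n) ** matpow T n) *v x) y)
                           = cinner (A *v x) y))))
       \<and> (convergent (cesaro T) \<longrightarrow> power_bounded T)"
  using part1[of T] part2[of T] by blast

end
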